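(* Assume $q\neq 0$, $d\neq 0$ and $A\neq 0$. For every integer $n$ let $x_n=h_{n+1}-qh_{n-1}$. Then for all integers $n$ and $k$, $$\left(\frac{x_n+h_n d}{2Ad}\right)^k=\frac{x_{kn}+h_{kn}d}{2Ad}.$$
   Context: Let $p,q,a,b$ be complex numbers. Fix $d=\sqrt{p^2-4q}$ and put $\alpha=\frac{p+d}{2}$, $\beta=\frac{p-d}{2}$, $A=b-a\beta$. The Horadam-Lucas sequence $(h_n)$ is defined by $h_0=2b-ap$, $h_1=bp-2aq$, and $h_n=ph_{n-1}-qh_{n-2}$. Since $q\neq 0$, it is extended to all integer indices by $h_{n-2}=(ph_{n-1}-h_n)/q$. *)

theory Defs
  imports Complex_Main
begin

fun hl_pos :: "complex \<Rightarrow> complex \<Rightarrow> complex \<Rightarrow> complex \<Rightarrow> nat \<Rightarrow> complex" where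
  "hl_pos p q a b 0 = 2*b - a*p"
| "hl_pos p q a b (Suc 0) = b*p - 2*a*q"
| "hl_pos p q a b (Suc (Suc n)) = p * hl_pos p q a b (Suc n) - q * hl_pos p q a b n"

text \<open>hl_neg m is h_{-m}.\<close>
fun hl_neg :: "complex \<Rightarrow> complex \<Rightarrow> complex \<Rightarrow> complex \<Rightarrow> nat \<Rightarrow> complex" where
  "hl_neg p q a b 0 = 2*b - a*p"
| "hl_neg p q a b (Suc 0) = (p * (2*b - a*p) - (b*p - 2*a*q)) / q"
| "hl_neg p q a b (Suc (Suc m)) = (p * hl_neg p q a b (Suc m) - hl_neg p q a b m) / q"

definition horadam_lucas :: "complex \<Rightarrow> complex \<Rightarrow> complex \<Rightarrow> complex \<Rightarrow> int \<Rightarrow> complex" where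
  "horadam_lucas p q a b n =
     (if 0 \<le> n then hl_pos p q a b (nat n) else hl_neg p q a b (nat (- n)))"

definition hl_d :: "complex \<Rightarrow> complex \<Rightarrow> complex" where
  "hl_d p q = csqrt (p^2 - 4*q)"

definition hl_beta :: "complex \<Rightarrow> complex \<Rightarrow> complex" where
  "hl_beta p q = (p - hl_d p q) / 2"

definition hl_A :: "complex \<Rightarrow> complex \<Rightarrow> complex \<Rightarrow> complex \<Rightarrow> complex" where
  "hl_A p q a b = b - a * hl_beta p q"

definition hl_x :: "complex \<Rightarrow> complex \<Rightarrow> complex \<Rightarrow> complex \<Rightarrow> int \<Rightarrow> complex" where
  "hl_x p q a b n = horadam_lucas p q a b (n+1) - q * horadam_lucas p q a b (n-1)"

end

theory Submission
  imports Defs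
begin

lemma hl_main:
  fixes p q a b :: complex
  assumes q: "q \<noteq> 0"
  defines "d \<equiv> hl_d p q"
  defines "al \<equiv> (p + d) / 2"
  defines "be \<equiv> (p - d) / 2"
  defines "B \<equiv> b - a * al"
  defines "f \<equiv> (\<lambda>n::int. hl_A p q a b * al powi n + B * be powi n)"
  shows "horadam_lucas p q a b n = f n"
    and "al * be = q" and "al + be = p" and "al - be = d"
proof -
  have d2: "d^2 = p^2 - 4*q" unfolding d_def hl_d_def by simp
  show albe: "al * be = q" unfolding al_def be_def
    using d2 by (simp add: field_simps power2_eq_square)
  show sum: "al + be = p" unfolding al_def be_def by (simp add: field_simps)
  show "al - be = d" unfolding al_def be_def by (simp add: field_simps)
  have al0: "al \<noteq> 0" and be0: "be \<noteq> 0" using albe q by auto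
  have A: "hl_A p q a b = b - a * be"
    unfolding hl_A_def hl_beta_def be_def d_def by simp
  have al2: "al^2 = p*al - q" using albe sum
    by (simp add: power2_eq_square algebra_simps flip: sum albe)
  have be2: "be^2 = p*be - q" using albe sum
    by (simp add: power2_eq_square algebra_simps flip: sum albe)
  have rec: "f (n+2) = p * f (n+1) - q * f n" for n
  proof -
    have e: "al powi (n+2) = al powi n * al^2" "al powi (n+1) = al powi n * al"
      "be powi (n+2) = be powi n * be^2" "be powi (n+1) = be powi n * be"
      using al0 be0 by (simp_all add: power_int_add)
    show ?thesis unfolding f_def e al2 be2 by (simp add: algebra_simps)
  qed
  have f0: "f 0 = 2*b - a*p" unfolding f_def A B_def using sum[symmetric]
    by (simp add: algebra_simps)
  have f1: "f 1 = b*p - 2*a*q" unfolding f_def A B_def using sum[symmetric] albe[symmetric]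
    by (simp add: algebra_simps)
  have pos: "hl_pos p q a b m = f (int m) \<and> hl_pos p q a b (Suc m) = f (int (Suc m))" for m
  proof (induction m)
    case 0 then show ?case using f0 f1 by simp
  next
    case (Suc m)
    then show ?case using rec[of "int m"] by (simp add: algebra_simps)
  qed
  have fm1: "f (-1) = (p * f 0 - f 1) / q" using rec[of "-1"] q by (simp add: field_simps)
  have neg: "hl_neg p q a b m = f (- int m) \<and> hl_neg p q a b (Suc m) = f (- int (Suc m))" for m
  proof (induction m)
    case 0 then show ?case using f0 f1 fm1 by simp
  next
    case (Suc m)
    have r: "f (- int m - 2 + 2) = p * f (- int m - 2 + 1) - q * f (- int m - 2)"
      by (rule rec)
    have h1: "- int m - 2 + 2 = - int m" "- int m - 2 + 1 = - int m - 1" by simp_all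
    have "f (- int m) = p * f (- int m - 1) - q * f (- int m - 2)"
      using r unfolding h1 .
    then have "f (- int m - 2) = (p * f (- int m - 1) - f (- int m)) / q"
      using q by (simp add: field_simps)
    moreover have e3: "- int (Suc m) = - int m - 1" "- int (Suc (Suc m)) = - int m - 2" by simp_all
    moreover have "hl_neg p q a b (Suc (Suc m)) = (p * hl_neg p q a b (Suc m) - hl_neg p q a b m) / q"
      by simp
    ultimately show ?case using Suc unfolding e3 by simp
  qed
  show "horadam_lucas p q a b n = f n"
    unfolding horadam_lucas_def using pos[of "nat n"] neg[of "nat (-n)"] by auto
qed

theorem mainTheorem2:
  fixes p q a b :: complex and n k :: int
  assumes "q \<noteq> 0" and "hl_d p q \<noteq> 0" and "hl_A p q a b \<noteq> 0"
  shows "((hl_x p q a b n + horadam_lucas p q a b n * hl_d p q) / (2 * hl_A p q a b * hl_d p q)) powi k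
       = (hl_x p q a b (k*n) + horadam_lucas p q a b (k*n) * hl_d p q) / (2 * hl_A p q a b * hl_d p q)"
proof -
  define d where "d = hl_d p q"
  define al where "al = (p + d) / 2"
  define be where "be = (p - d) / 2"
  define A where "A = hl_A p q a b"
  define B where "B = b - a * al"
  define f where "f = (\<lambda>n::int. hl_A p q a b * al powi n + B * be powi n)"
  have M1: "horadam_lucas p q a b m = f m" for m
    using hl_main(1)[OF assms(1), where a=a and b=b and n=m]
    unfolding f_def B_def al_def be_def d_def by simp
  note M = M1 hl_main(2-4)[OF assms(1), where p=p, folded d_def, folded al_def be_def]
  have al0: "al \<noteq> 0" and be0: "be \<noteq> 0" using M(2) assms(1) by auto
  have key: "(hl_x p q a b m + horadam_lucas p q a b m * d) / (2 * A * d) = al powi m" for m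
  proof -
    have e: "al powi (m+1) = al powi m * al" "al powi (m-1) = al powi m / al"
      "be powi (m+1) = be powi m * be" "be powi (m-1) = be powi m / be"
      using al0 be0 by (simp_all add: power_int_add power_int_diff)
    have qa: "q / al = be" "q / be = al" using M(2) al0 be0 by (auto simp: field_simps)
    have "hl_x p q a b m + horadam_lucas p q a b m * d
        = A * al powi m * (al - q/al + d) + B * be powi m * (be - q / be + d)"
      unfolding hl_x_def M(1) f_def e A_def[symmetric] by (simp add: algebra_simps)
    also have "\<dots> = 2 * A * d * al powi m" unfolding qa using M(4)
      by (simp add: algebra_simps flip: M(4))
    finally show ?thesis using assms(2,3) unfolding d_def A_def by simp
  qed
  show ?thesis using key[of n] key[of "k*n"]
    unfolding d_def[symmetric] A_def[symmetric]
    by (simp add: mult.commute) (metis power_int_mult mult.commute)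
qed

end
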